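(* Let $\lambda\in\mathbb C$, $n\in\mathbb N$, $0<\rho\le1$, and let $C_{\rho,\lambda}=\operatorname{conv}\{(\mu,\mu^2,\dots,\mu^n):\mu\in\mathbb C,\ |\mu-\lambda|\le\rho\}\subset\mathbb C^n$. Then $$\operatorname{dist}\{(\lambda,\lambda^2,\dots,\lambda^n),\partial C_{\rho,\lambda}\}\ge\frac{\rho^n}{4^n\max\{1,|\lambda|^n\}},$$ and if $\lambda=0$ then $\operatorname{dist}\{(0,\dots,0),\partial C_{\rho,0}\}\ge\rho^n/2^n$.
   Context: $\operatorname{conv}$ denotes convex hull, $\partial$ topological boundary in $\mathbb C^n$, and distances are taken with respect to the norm $\|z\|=\max_j|z_j|$ on $\mathbb C^n$. *)

theory Defs
  imports "HOL-Analysis.Analysis"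
begin

definition maxnorm :: "complex ^ 'n \<Rightarrow> real" where
  "maxnorm x = Max (range (\<lambda>i. norm (x $ i)))"

definition maxdist :: "complex ^ 'n \<Rightarrow> (complex ^ 'n) set \<Rightarrow> real" where
  "maxdist a S = Inf {maxnorm (a - y) | y. y \<in> S}"

text \<open>Moment point (mu, mu^2, ..., mu^n); coordinates labelled by idx i in {1..n}.\<close>
definition moment :: "('n \<Rightarrow> nat) \<Rightarrow> complex \<Rightarrow> complex ^ 'n" where
  "moment idx \<mu> = (\<chi> i. \<mu> ^ idx i)"

definition Cset :: "('n \<Rightarrow> nat) \<Rightarrow> real \<Rightarrow> complex \<Rightarrow> (complex ^ 'n) set" where
  "Cset idx \<rho> lam = convex hull {moment idx \<mu> | \<mu>. cmod (\<mu> - lam) \<le> \<rho>}"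

end

theory Submission
  imports Defs
begin

definition ee :: "nat \<Rightarrow> real \<Rightarrow> complex" where
  "ee m x = exp (complex_of_real (2 * pi * x / real m) * \<i>)"

lemma ee_add: "ee m (x + y) = ee m x * ee m y"
  unfolding ee_def by (simp add: add_divide_distrib distrib_left distrib_right exp_add)

lemma ee_0[simp]: "ee m 0 = 1" unfolding ee_def by simp

lemma ee_pow: "ee m x ^ t = ee m (real t * x)"
  unfolding ee_def by (simp flip: exp_of_nat_mult add: mult_ac)

lemma cnj_ee: "cnj (ee m x) = ee m (- x)"
  unfolding ee_def by (simp add: exp_cnj)

lemma norm_ee[simp]: "norm (ee m x) = 1"
  unfolding ee_def by simp

lemma ee_geo:
  fixes s :: int
  assumes "m > 0" "\<not> (int m dvd s)"
  shows "(\<Sum>j<m. ee m (real j * of_int s)) = 0"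
proof -
  have e: "ee m (real j * of_int s) = ee m (of_int s) ^ j" for j by (simp add: ee_pow)
  have m1: "ee m (of_int s) ^ m = 1"
  proof -
    have "ee m (of_int s) ^ m = ee m (real m * of_int s)" by (simp add: ee_pow)
    also have "\<dots> = exp (complex_of_real (2 * pi * of_int s) * \<i>)"
      unfolding ee_def using assms by (simp add: mult_ac)
    also have "\<dots> = 1" by (subst exp_eq_1) (auto simp: mult_ac)
    finally show ?thesis .
  qed
  have n1: "ee m (of_int s) \<noteq> 1"
  proof
    assume "ee m (of_int s) = 1"
    then obtain k :: int where k: "2 * pi * of_int s / real m = of_int (2*k) * pi"
      unfolding ee_def by (auto simp: exp_eq_1)
    hence "of_int s = real m * of_int k" using assms(1) by (simp add: field_simps)
    hence "s = int m * k" by (metis of_int_eq_iff of_int_mult of_int_of_nat_eq)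
    thus False using assms(2) by simp
  qed
  show ?thesis unfolding e sum_gp_strict using m1 n1 by simp
qed

lemma ee_geo0:
  assumes "m > 0"
  shows "(\<Sum>j<m. ee m (real j * 0)) = of_nat m"
  by simp


definition wt :: "nat \<Rightarrow> (nat \<Rightarrow> complex) \<Rightarrow> nat \<Rightarrow> real" where
  "wt n a j = (1 + 2 * Re (\<Sum>i\<in>{1..n}. a i * ee (2*n+1) (- (real j * real i)))) / real (2*n+1)"

lemma wt_nonneg:
  assumes "(\<Sum>i\<in>{1..n}. norm (a i)) \<le> 1/2"
  shows "wt n a j \<ge> 0"
proof -
  let ?S = "\<Sum>i\<in>{1..n}. a i * ee (2*n+1) (- (real j * real i))"
  have "norm ?S \<le> (\<Sum>i\<in>{1..n}. norm (a i * ee (2*n+1) (- (real j * real i))))"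
    by (rule norm_sum)
  also have "\<dots> = (\<Sum>i\<in>{1..n}. norm (a i))" by (simp add: norm_mult)
  finally have "norm ?S \<le> 1/2" using assms by linarith
  hence "\<bar>Re ?S\<bar> \<le> 1/2" using abs_Re_le_cmod order_trans by blast
  thus ?thesis unfolding wt_def by (intro divide_nonneg_pos) auto
qed

lemma sum_ee_int:
  fixes s :: int
  assumes "\<bar>s\<bar> < int m"
  shows "(\<Sum>j<m. ee m (real j * of_int s)) = (if s = 0 then of_nat m else 0)"
proof (cases "s = 0")
  case False
  have "\<not> int m dvd s"
  proof
    assume "int m dvd s"
    then obtain k where "s = int m * k" by auto
    with False have "\<bar>k\<bar> \<ge> 1" by auto
    hence "int m * 1 \<le> int m * \<bar>k\<bar>" by (intro mult_left_mono) auto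
    hence "\<bar>s\<bar> \<ge> int m" using \<open>s = int m * k\<close> by (simp add: abs_mult)
    thus False using assms by simp
  qed
  moreover have "m > 0" using assms by simp
  ultimately show ?thesis using ee_geo False by simp
qed simp

lemma wt_moment:
  assumes "t \<le> n"
  shows "(\<Sum>j<2*n+1. complex_of_real (wt n a j) * ee (2*n+1) (real j * real t))
       = (if t = 0 then 1 else a t)"
proof -
  define m where "m = 2*n+1"
  have mpos: "real m > 0" unfolding m_def by simp
  define S where "S j = (\<Sum>i\<in>{1..n}. a i * ee m (- (real j * real i)))" for j
  have cS: "cnj (S j) = (\<Sum>i\<in>{1..n}. cnj (a i) * ee m (real j * real i))" for j
    unfolding S_def by (simp add: cnj_ee)
  have ofr: "complex_of_real (wt n a j) = (1 + S j + cnj (S j)) / of_nat m" for j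
  proof -
    have "complex_of_real (2 * Re (S j)) = S j + cnj (S j)"
      by (simp add: complex_add_cnj)
    thus ?thesis unfolding wt_def m_def[symmetric] S_def[symmetric]
      by (simp add: of_real_def[symmetric] field_simps)
  qed
  have e1: "ee m (- (real j * real i)) * ee m (real j * real t) = ee m (real j * of_int (int t - int i))" for i j
    by (simp flip: ee_add add: algebra_simps)
  have e2: "ee m (real j * real i) * ee m (real j * real t) = ee m (real j * of_int (int t + int i))" for i j
    by (simp flip: ee_add add: algebra_simps)
  have pw: "complex_of_real (wt n a j) * ee m (real j * real t) = (ee m (real j * of_int (int t))
          + (\<Sum>i\<in>{1..n}. a i * ee m (real j * of_int (int t - int i)))
          + (\<Sum>i\<in>{1..n}. cnj (a i) * ee m (real j * of_int (int t + int i)))) / of_nat m" for j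
  proof -
    have "S j * ee m (real j * real t) = (\<Sum>i\<in>{1..n}. a i * ee m (real j * of_int (int t - int i)))"
      unfolding S_def sum_distrib_right by (simp add: mult.assoc e1)
    moreover have "cnj (S j) * ee m (real j * real t) = (\<Sum>i\<in>{1..n}. cnj (a i) * ee m (real j * of_int (int t + int i)))"
      unfolding cS sum_distrib_right by (simp add: mult.assoc e2)
    ultimately show ?thesis unfolding ofr by (simp add: distrib_right)
  qed
  have "(\<Sum>j<m. complex_of_real (wt n a j) * ee m (real j * real t))
     = (\<Sum>j<m. ee m (real j * of_int (int t))
          + (\<Sum>i\<in>{1..n}. a i * ee m (real j * of_int (int t - int i)))
          + (\<Sum>i\<in>{1..n}. cnj (a i) * ee m (real j * of_int (int t + int i)))) / of_nat m"
    unfolding pw by (simp add: sum_divide_distrib)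
  also have "\<dots> = ((\<Sum>j<m. ee m (real j * of_int (int t)))
          + (\<Sum>i\<in>{1..n}. a i * (\<Sum>j<m. ee m (real j * of_int (int t - int i))))
          + (\<Sum>i\<in>{1..n}. cnj (a i) * (\<Sum>j<m. ee m (real j * of_int (int t + int i))))) / of_nat m"
  proof -
    have sw1: "(\<Sum>j<m. \<Sum>i\<in>{1..n}. a i * ee m (real j * of_int (int t - int i)))
       = (\<Sum>i\<in>{1..n}. a i * (\<Sum>j<m. ee m (real j * of_int (int t - int i))))"
      by (simp only: sum_distrib_left) (rule sum.swap)
    have sw2: "(\<Sum>j<m. \<Sum>i\<in>{1..n}. cnj (a i) * ee m (real j * of_int (int t + int i)))
       = (\<Sum>i\<in>{1..n}. cnj (a i) * (\<Sum>j<m. ee m (real j * of_int (int t + int i))))"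
      by (simp only: sum_distrib_left) (rule sum.swap)
    show ?thesis by (simp only: sum.distrib sw1 sw2)
  qed
  also have "(\<Sum>j<m. ee m (real j * of_int (int t))) = (if t = 0 then of_nat m else 0)"
    using assms by (subst sum_ee_int) (auto simp: m_def)
  also have "(\<Sum>i\<in>{1..n}. a i * (\<Sum>j<m. ee m (real j * of_int (int t - int i))))
      = (\<Sum>i\<in>{1..n}. if i = t then of_nat m * a t else 0)"
    using assms by (intro sum.cong refl, subst sum_ee_int) (auto simp: m_def)
  also have "\<dots> = (if t \<in> {1..n} then of_nat m * a t else 0)"
    by (simp add: sum.delta')
  also have "(\<Sum>i\<in>{1..n}. cnj (a i) * (\<Sum>j<m. ee m (real j * of_int (int t + int i)))) = 0"
    using assms by (intro sum.neutral ballI, subst sum_ee_int) (auto simp: m_def)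
  also have "((if t = 0 then of_nat m else 0) + (if t \<in> {1..n} then of_nat m * a t else 0) + 0) / (of_nat m::complex)
      = (if t = 0 then 1 else a t)" using assms mpos by (cases "t = 0") auto
  finally show ?thesis by (simp only: m_def)
qed


lemma binom_inv:
  fixes x :: complex and D :: "nat \<Rightarrow> complex"
  shows "(\<Sum>t\<le>l. of_nat (l choose t) * x^(l-t) * (\<Sum>s\<le>t. of_nat (t choose s) * (-x)^(t-s) * D s)) = D l"
proof -
  have inner: "(\<Sum>t\<in>{s..l}. of_nat (l choose t) * x^(l-t) * (of_nat (t choose s) * (-x)^(t-s)))
     = of_nat (l choose s) * (0::complex)^(l-s)" if "s \<le> l" for s
  proof -
    have "(\<Sum>t\<in>{s..l}. of_nat (l choose t) * x^(l-t) * (of_nat (t choose s) * (-x)^(t-s)))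
        = (\<Sum>t\<in>{s..l}. of_nat (l choose s) * (of_nat ((l-s) choose (t-s)) * (-x)^(t-s) * x^((l-s)-(t-s))))"
    proof (intro sum.cong refl)
      fix t assume t: "t \<in> {s..l}"
      have "(l choose t) * (t choose s) = (l choose s) * ((l - s) choose (t - s))"
        using t by (intro choose_mult) auto
      hence c: "(of_nat (l choose t) * of_nat (t choose s) :: complex) = of_nat (l choose s) * of_nat ((l - s) choose (t - s))"
        by (metis of_nat_mult)
      have "l - t = (l-s)-(t-s)" using t by auto
      thus "of_nat (l choose t) * x^(l-t) * (of_nat (t choose s) * (-x)^(t-s))
          = of_nat (l choose s) * (of_nat ((l-s) choose (t-s)) * (-x)^(t-s) * x^((l-s)-(t-s)))"
      proof -
        have "of_nat (l choose t) * x^(l-t) * (of_nat (t choose s) * (-x)^(t-s))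
           = (of_nat (l choose t) * of_nat (t choose s)) * ((-x)^(t-s) * x^(l-t))" by (simp only: mult_ac)
        also have "\<dots> = (of_nat (l choose s) * of_nat ((l - s) choose (t - s))) * ((-x)^(t-s) * x^((l-s)-(t-s)))"
          using c \<open>l - t = (l-s)-(t-s)\<close> by simp
        finally show ?thesis by (simp only: mult_ac)
      qed
    qed
    also have "\<dots> = of_nat (l choose s) * (\<Sum>t\<in>{s..l}. of_nat ((l-s) choose (t-s)) * (-x)^(t-s) * x^((l-s)-(t-s)))"
      by (simp add: sum_distrib_left)
    also have "(\<Sum>t\<in>{s..l}. of_nat ((l-s) choose (t-s)) * (-x)^(t-s) * x^((l-s)-(t-s)))
        = (\<Sum>u\<le>l-s. of_nat ((l-s) choose u) * (-x)^u * x^((l-s)-u))"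
    proof -
      have "{s..l} = (\<lambda>u. u + s) ` {0..l-s}" using that
        by (auto simp: image_iff intro!: bexI[where x="_ - s"])
      moreover have "inj_on (\<lambda>u. u + s) {0..l-s}" by (auto simp: inj_on_def)
      ultimately show ?thesis by (simp add: sum.reindex atLeast0AtMost)
    qed
    also have "\<dots> = (-x + x)^(l-s)" by (rule binomial_ring[symmetric])
    also have "(-x + x)^(l-s) = (0::complex)^(l-s)" by simp
    finally show ?thesis .
  qed
  have "(\<Sum>t\<le>l. of_nat (l choose t) * x^(l-t) * (\<Sum>s\<le>t. of_nat (t choose s) * (-x)^(t-s) * D s))
      = (\<Sum>t\<le>l. \<Sum>s\<le>l. if s \<le> t then D s * (of_nat (l choose t) * x^(l-t) * (of_nat (t choose s) * (-x)^(t-s))) else 0)"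
  proof (intro sum.cong refl)
    fix t assume "t \<in> {..l}"
    hence st: "{..t} = {s\<in>{..l}. s \<le> t}" by auto
    have fe: "(\<Sum>s\<le>l. if s \<le> t then D s * (of_nat (l choose t) * x^(l-t) * (of_nat (t choose s) * (-x)^(t-s))) else 0)
      = (\<Sum>s\<in>{s\<in>{..l}. s \<le> t}. D s * (of_nat (l choose t) * x^(l-t) * (of_nat (t choose s) * (-x)^(t-s))))"
      by (rule sum.inter_filter[symmetric]) simp
    show "of_nat (l choose t) * x^(l-t) * (\<Sum>s\<le>t. of_nat (t choose s) * (-x)^(t-s) * D s)
       = (\<Sum>s\<le>l. if s \<le> t then D s * (of_nat (l choose t) * x^(l-t) * (of_nat (t choose s) * (-x)^(t-s))) else 0)"
      unfolding fe st[symmetric] sum_distrib_left by (intro sum.cong refl) (simp only: mult_ac)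
  qed
  also have "\<dots> = (\<Sum>s\<le>l. \<Sum>t\<le>l. if s \<le> t then D s * (of_nat (l choose t) * x^(l-t) * (of_nat (t choose s) * (-x)^(t-s))) else 0)"
    by (rule sum.swap)
  also have "\<dots> = (\<Sum>s\<le>l. D s * (of_nat (l choose s) * (0::complex)^(l-s)))"
  proof (intro sum.cong refl)
    fix s assume s: "s \<in> {..l}"
    have st: "{s..l} = {t\<in>{..l}. s \<le> t}" by auto
    have "(\<Sum>t\<le>l. if s \<le> t then D s * (of_nat (l choose t) * x^(l-t) * (of_nat (t choose s) * (-x)^(t-s))) else 0)
        = D s * (\<Sum>t\<in>{s..l}. of_nat (l choose t) * x^(l-t) * (of_nat (t choose s) * (-x)^(t-s)))"
      unfolding st sum_distrib_left by (rule sum.inter_filter[symmetric]) simp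
    thus "(\<Sum>t\<le>l. if s \<le> t then D s * (of_nat (l choose t) * x^(l-t) * (of_nat (t choose s) * (-x)^(t-s))) else 0)
        = D s * (of_nat (l choose s) * (0::complex)^(l-s))" using inner s by simp
  qed
  also have "\<dots> = (\<Sum>s\<le>l. if s = l then D l else 0)"
    by (intro sum.cong refl) auto
  also have "\<dots> = D l" by simp
  finally show ?thesis .
qed

lemma wt_point:
  fixes lam :: complex and \<rho> :: real
  assumes "l \<le> n"
  shows "(\<Sum>j<2*n+1. complex_of_real (wt n a j) * (lam + of_real \<rho> * ee (2*n+1) (real j))^l)
     = (\<Sum>t\<le>l. of_nat (l choose t) * (of_real \<rho>^t * (if t = 0 then 1 else a t)) * lam^(l-t))"
proof -
  have "(\<Sum>j<2*n+1. complex_of_real (wt n a j) * (lam + of_real \<rho> * ee (2*n+1) (real j))^l)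
     = (\<Sum>j<2*n+1. \<Sum>t\<le>l. of_nat (l choose t) * of_real \<rho>^t * lam^(l-t) * (complex_of_real (wt n a j) * ee (2*n+1) (real j * real t)))"
  proof (intro sum.cong refl)
    fix j
    have "(lam + of_real \<rho> * ee (2*n+1) (real j))^l = (of_real \<rho> * ee (2*n+1) (real j) + lam)^l"
      by (simp add: add.commute)
    also have "\<dots> = (\<Sum>t\<le>l. of_nat (l choose t) * (of_real \<rho> * ee (2*n+1) (real j))^t * lam^(l-t))"
      by (rule binomial_ring)
    also have "\<dots> = (\<Sum>t\<le>l. of_nat (l choose t) * of_real \<rho>^t * lam^(l-t) * ee (2*n+1) (real j * real t))"
    proof (intro sum.cong refl)
      fix t
      have "(of_real \<rho> * ee (2*n+1) (real j))^t = of_real \<rho>^t * ee (2*n+1) (real t * real j)"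
        by (simp only: power_mult_distrib ee_pow)
      also have "real t * real j = real j * real t" by (rule mult.commute)
      finally show "of_nat (l choose t) * (of_real \<rho> * ee (2*n+1) (real j))^t * lam^(l-t)
         = of_nat (l choose t) * of_real \<rho>^t * lam^(l-t) * ee (2*n+1) (real j * real t)"
        by (simp only: mult_ac)
    qed
    finally show "complex_of_real (wt n a j) * (lam + of_real \<rho> * ee (2*n+1) (real j))^l
      = (\<Sum>t\<le>l. of_nat (l choose t) * of_real \<rho>^t * lam^(l-t) * (complex_of_real (wt n a j) * ee (2*n+1) (real j * real t)))"
      by (simp only: sum_distrib_left mult_ac)
  qed
  also have "\<dots> = (\<Sum>t\<le>l. of_nat (l choose t) * of_real \<rho>^t * lam^(l-t) * (\<Sum>j<2*n+1. complex_of_real (wt n a j) * ee (2*n+1) (real j * real t)))"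
    by (simp only: sum_distrib_left) (rule sum.swap)
  also have "\<dots> = (\<Sum>t\<le>l. of_nat (l choose t) * (of_real \<rho>^t * (if t = 0 then 1 else a t)) * lam^(l-t))"
  proof (intro sum.cong refl)
    fix t assume "t \<in> {..l}"
    hence tn: "t \<le> n" using assms by simp
    show "of_nat (l choose t) * of_real \<rho>^t * lam^(l-t) * (\<Sum>j<2*n+1. complex_of_real (wt n a j) * ee (2*n+1) (real j * real t))
      = of_nat (l choose t) * (of_real \<rho>^t * (if t = 0 then 1 else a t)) * lam^(l-t)"
      by (simp only: wt_moment[OF tn]) (simp add: mult_ac)
  qed
  finally show ?thesis .
qed


lemma maxnorm_ge: "norm (x $ i) \<le> maxnorm x"
  unfolding maxnorm_def by (rule Max_ge) auto

lemma maxnorm_le: "(\<And>i. norm (x $ i) \<le> r) \<Longrightarrow> maxnorm x \<le> r"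
  unfolding maxnorm_def by (subst Max_le_iff) auto

lemma maxnorm_triangle: "maxnorm (x + y) \<le> maxnorm x + maxnorm y"
proof (rule maxnorm_le)
  fix i
  have "norm ((x + y) $ i) \<le> norm (x $ i) + norm (y $ i)" by (simp add: norm_triangle_ineq)
  also have "\<dots> \<le> maxnorm x + maxnorm y" by (intro add_mono maxnorm_ge)
  finally show "norm ((x + y) $ i) \<le> maxnorm x + maxnorm y" .
qed

lemma maxnorm_le_norm: "maxnorm x \<le> norm x"
  by (rule maxnorm_le) (rule Finite_Cartesian_Product.norm_nth_le)

lemma maxdist_ge:
  fixes a :: "complex ^ 'n::finite"
  assumes "\<And>z. maxnorm (a - z) \<le> \<delta> \<Longrightarrow> z \<in> C" "bounded C" "\<delta> \<ge> 0"
  shows "maxdist a (frontier C) \<ge> \<delta>"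
proof -
  have "a \<in> C" using assms(1)[of a] assms(3) by (simp add: maxnorm_def)
  hence "frontier C \<noteq> {}" using assms(2) frontier_eq_empty not_bounded_UNIV by blast
  hence ne: "{maxnorm (a - y) | y. y \<in> frontier C} \<noteq> {}" by blast
  have "maxnorm (a - y) \<ge> \<delta>" if y: "y \<in> frontier C" for y
  proof (rule ccontr)
    assume "\<not> ?thesis"
    hence s: "\<delta> - maxnorm (a - y) > 0" by simp
    have "ball y (\<delta> - maxnorm (a - y)) \<subseteq> C"
    proof
      fix z assume "z \<in> ball y (\<delta> - maxnorm (a - y))"
      hence "norm (y - z) < \<delta> - maxnorm (a - y)" by (simp add: dist_norm)
      hence "maxnorm (y - z) < \<delta> - maxnorm (a - y)" using maxnorm_le_norm[of "y - z"] by linarith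
      moreover have "maxnorm (a - z) \<le> maxnorm (a - y) + maxnorm (y - z)"
        using maxnorm_triangle[of "a - y" "y - z"] by simp
      ultimately have "maxnorm (a - z) \<le> \<delta>" by linarith
      thus "z \<in> C" by (rule assms(1))
    qed
    hence "y \<in> interior C" using s by (intro interiorI[OF open_ball]) auto
    thus False using y by (simp add: frontier_def)
  qed
  thus ?thesis unfolding maxdist_def using ne by (intro cInf_greatest) auto
qed

lemma bounded_Cset: "bounded (Cset idx \<rho> lam)"
proof -
  have "{moment idx \<mu> | \<mu>. cmod (\<mu> - lam) \<le> \<rho>} = moment idx ` cball lam \<rho>"
    by (auto simp: dist_norm norm_minus_commute)
  moreover have "continuous_on (cball lam \<rho>) (moment idx)"
    unfolding moment_def by (intro continuous_on_vec_lambda continuous_intros)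
  ultimately have "compact {moment idx \<mu> | \<mu>. cmod (\<mu> - lam) \<le> \<rho>}"
    using compact_continuous_image[OF _ compact_cball] by metis
  thus ?thesis unfolding Cset_def by (intro compact_imp_bounded compact_convex_hull)
qed

lemma two_n: "n \<ge> 1 \<Longrightarrow> real n / 2^n \<le> 1/2"
proof (induction n rule: dec_induct)
  case base thus ?case by simp
next
  case (step n)
  have "real (Suc n) / 2 ^ Suc n = (real n + 1) / (2 * 2^n)" by simp
  also have "\<dots> \<le> (2 * real n) / (2 * 2^n)" using step(1) by (intro divide_right_mono) auto
  also have "\<dots> = real n / 2^n" by simp
  finally show ?case using step by linarith
qed


lemma in_Cset:
  fixes idx :: "'n::finite \<Rightarrow> nat" and lam :: complex and \<rho> \<delta> :: real
  assumes bij: "bij_betw idx UNIV {1..CARD('n)}" and rho: "\<rho> > 0" and del: "\<delta> \<ge> 0"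
    and H: "\<And>t. t \<in> {1..CARD('n)} \<Longrightarrow> (1 + cmod lam)^t * \<delta> / \<rho>^t \<le> 1 / 2^CARD('n)"
    and z: "maxnorm (z - moment idx lam) \<le> \<delta>"
  shows "z \<in> Cset idx \<rho> lam"
proof -
  define n where "n = CARD('n)"
  have n1: "n \<ge> 1" unfolding n_def using finite_UNIV_card_ge_0 by (simp add: Suc_le_eq)
  define D where "D k = (if k = 0 then 0 else (z - moment idx lam) $ (inv_into UNIV idx k))" for k
  have Dn: "norm (D k) \<le> \<delta>" for k
    unfolding D_def using del maxnorm_ge[of "z - moment idx lam"] z order_trans by auto
  define c where "c t = (\<Sum>s\<le>t. of_nat (t choose s) * (-lam)^(t-s) * D s)" for t
  have c0: "c 0 = 0" unfolding c_def D_def by simp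
  have cb: "norm (c t) \<le> (1 + cmod lam)^t * \<delta>" for t
  proof -
    have "norm (c t) \<le> (\<Sum>s\<le>t. norm (of_nat (t choose s) * (-lam)^(t-s) * D s))"
      unfolding c_def by (rule norm_sum)
    also have "\<dots> \<le> (\<Sum>s\<le>t. of_nat (t choose s) * 1^s * cmod lam^(t-s) * \<delta>)"
    proof (intro sum_mono)
      fix s
      have "norm (of_nat (t choose s) * (-lam)^(t-s) * D s) = of_nat (t choose s) * cmod lam^(t-s) * norm (D s)"
        by (simp add: norm_mult norm_power)
      also have "\<dots> \<le> of_nat (t choose s) * cmod lam^(t-s) * \<delta>"
        using Dn by (intro mult_left_mono) auto
      finally show "norm (of_nat (t choose s) * (-lam)^(t-s) * D s) \<le> of_nat (t choose s) * 1^s * cmod lam^(t-s) * \<delta>" by simp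
    qed
    also have "\<dots> = (1 + cmod lam)^t * \<delta>"
      by (simp add: binomial_ring sum_distrib_right)
    finally show ?thesis .
  qed
  define a where "a t = c t / of_real \<rho>^t" for t
  have an: "norm (a t) \<le> 1 / 2^n" if "t \<in> {1..n}" for t
  proof -
    have "norm (a t) = norm (c t) / \<rho>^t" unfolding a_def using rho by (simp add: norm_divide norm_power)
    also have "\<dots> \<le> (1 + cmod lam)^t * \<delta> / \<rho>^t" using rho cb by (intro divide_right_mono) auto
    also have "\<dots> \<le> 1 / 2^n" using H that unfolding n_def by auto
    finally show ?thesis .
  qed
  have asum: "(\<Sum>i\<in>{1..n}. norm (a i)) \<le> 1/2"
  proof -
    have "(\<Sum>i\<in>{1..n}. norm (a i)) \<le> (\<Sum>i\<in>{1..n}. 1 / 2^n)" by (intro sum_mono an)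
    also have "\<dots> = real n / 2^n" by simp
    also have "\<dots> \<le> 1/2" using two_n[OF n1] by simp
    finally show ?thesis .
  qed
  define m where "m = 2*n+1"
  define w where "w j = wt n a j" for j
  define y where "y j = moment idx (lam + of_real \<rho> * ee m (real j))" for j
  have wsum: "(\<Sum>j<m. w j) = 1"
  proof -
    have "(\<Sum>j<2*n+1. complex_of_real (wt n a j) * ee (2*n+1) (real j * real 0)) = 1"
      using wt_moment[of 0 n a] by simp
    hence "complex_of_real (\<Sum>j<m. w j) = 1" unfolding w_def m_def by simp
    thus ?thesis by (simp only: of_real_eq_1_iff)
  qed
  have "(\<Sum>j<m. w j *\<^sub>R y j) \<in> Cset idx \<rho> lam"
    unfolding Cset_def
  proof (rule convex_sum)
    show "finite {..<m}" by simp
    show "convex (convex hull {moment idx \<mu> |\<mu>. cmod (\<mu> - lam) \<le> \<rho>})" by (rule convex_convex_hull)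
    show "(\<Sum>j<m. w j) = 1" by (rule wsum)
    show "\<And>i. i \<in> {..<m} \<Longrightarrow> 0 \<le> w i" unfolding w_def using asum by (intro wt_nonneg)
    show "\<And>i. i \<in> {..<m} \<Longrightarrow> y i \<in> convex hull {moment idx \<mu> |\<mu>. cmod (\<mu> - lam) \<le> \<rho>}"
      unfolding y_def using rho by (intro hull_inc) (auto simp: norm_mult)
  qed
  moreover have "(\<Sum>j<m. w j *\<^sub>R y j) = z"
  proof (subst vec_eq_iff, intro allI)
    fix i
    define l where "l = idx i"
    have l: "l \<in> {1..n}" unfolding l_def n_def using bij_betw_apply[OF bij] by simp
    have inv: "inv_into UNIV idx l = i" unfolding l_def using inv_into_f_f[OF bij_betw_imp_inj_on[OF bij]] by simp
    have "(\<Sum>j<m. w j *\<^sub>R y j) $ i = (\<Sum>j<2*n+1. complex_of_real (wt n a j) * (lam + of_real \<rho> * ee (2*n+1) (real j))^l)"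
    proof -
      have "(\<Sum>j<m. w j *\<^sub>R y j) $ i = (\<Sum>j<m. complex_of_real (w j) * (lam + of_real \<rho> * ee m (real j))^l)"
        unfolding sum_component vector_scaleR_component by (simp add: y_def moment_def l_def scaleR_conv_of_real)
      thus ?thesis by (simp only: m_def w_def)
    qed
    also have "\<dots> = (\<Sum>t\<le>l. of_nat (l choose t) * (of_real \<rho>^t * (if t = 0 then 1 else a t)) * lam^(l-t))"
      using l by (intro wt_point) auto
    also have "\<dots> = (\<Sum>t\<le>l. of_nat (l choose t) * lam^(l-t) * c t + (if t = 0 then lam^l else 0))"
    proof (intro sum.cong refl)
      fix t
      show "of_nat (l choose t) * (of_real \<rho>^t * (if t = 0 then 1 else a t)) * lam^(l-t)
          = of_nat (l choose t) * lam^(l-t) * c t + (if t = 0 then lam^l else 0)"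
        using rho c0 by (cases "t = 0") (auto simp: a_def)
    qed
    also have "\<dots> = (\<Sum>t\<le>l. of_nat (l choose t) * lam^(l-t) * c t) + lam^l"
      by (simp add: sum.distrib)
    also have "(\<Sum>t\<le>l. of_nat (l choose t) * lam^(l-t) * c t) = D l"
      unfolding c_def by (rule binom_inv)
    also have "D l + lam^l = z $ i"
      using l inv unfolding D_def by (simp add: moment_def l_def)
    finally show "(\<Sum>j<m. w j *\<^sub>R y j) $ i = z $ i" .
  qed
  ultimately show ?thesis by simp
qed


lemma maxnorm_minus: "maxnorm (a - z) = maxnorm (z - a)"
  unfolding maxnorm_def by (simp add: norm_minus_commute)

lemma maxdist_Cset:
  fixes idx :: "'n::finite \<Rightarrow> nat" and lam :: complex and \<rho> \<delta> :: real
  assumes bij: "bij_betw idx UNIV {1..CARD('n)}" and rho: "\<rho> > 0" and del: "\<delta> \<ge> 0"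
    and H: "\<And>t. t \<in> {1..CARD('n)} \<Longrightarrow> (1 + cmod lam)^t * \<delta> / \<rho>^t \<le> 1 / 2^CARD('n)"
  shows "maxdist (moment idx lam) (frontier (Cset idx \<rho> lam)) \<ge> \<delta>"
proof (rule maxdist_ge[OF _ bounded_Cset del])
  fix z assume "maxnorm (moment idx lam - z) \<le> \<delta>"
  hence "maxnorm (z - moment idx lam) \<le> \<delta>" by (simp add: maxnorm_minus)
  thus "z \<in> Cset idx \<rho> lam" using in_Cset[of idx \<rho> \<delta> lam z] bij rho del H by blast
qed

lemma H1:
  fixes L \<rho> :: real
  assumes "L \<ge> 0" "\<rho> > 0" "\<rho> \<le> 1" "t \<in> {1..n}"
  shows "(1 + L)^t * (\<rho> ^ n / (4 ^ n * max 1 (L ^ n))) / \<rho>^t \<le> 1 / 2^n"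
proof -
  define M where "M = max 1 L"
  have M1: "M \<ge> 1" unfolding M_def by simp
  have tn: "t \<le> n" using assms(4) by simp
  have Mn: "M^n = max 1 (L^n)"
  proof (cases "L \<le> 1")
    case True
    hence "L^n \<le> 1" using assms(1) by (simp add: power_le_one)
    thus ?thesis using True unfolding M_def by simp
  next
    case False
    hence "L^n \<ge> 1" by (simp add: one_le_power)
    thus ?thesis using False unfolding M_def by simp
  qed
  have "(1 + L)^t \<le> (2 * M)^t" using assms(1) M1 unfolding M_def by (intro power_mono) auto
  also have "\<dots> = 2^t * M^t" by (simp add: power_mult_distrib)
  also have "\<dots> \<le> 2^n * M^n" using tn M1 by (intro mult_mono power_increasing) auto
  finally have A: "(1 + L)^t \<le> 2^n * M^n" .
  have R: "\<rho>^n \<le> \<rho>^t" using tn assms(2,3) by (intro power_decreasing) auto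
  have Mpos: "M^n > 0" using M1 by simp
  have "(1 + L)^t * (\<rho> ^ n / (4 ^ n * M^n)) / \<rho>^t \<le> (2^n * M^n) * (\<rho> ^ t / (4 ^ n * M^n)) / \<rho>^t"
    using A R Mpos assms(1,2) by (intro divide_right_mono mult_mono divide_right_mono) auto
  also have "\<dots> = 2^n / 4^n" using Mpos M1 assms(2) by (simp add: field_simps)
  also have "\<dots> = 1 / 2^n" by (simp add: field_simps flip: power_mult_distrib)
  finally show ?thesis unfolding Mn .
qed

lemma H2:
  fixes \<rho> :: real
  assumes "\<rho> > 0" "\<rho> \<le> 1" "t \<in> {1..n}"
  shows "(1 + cmod (0::complex))^t * (\<rho> ^ n / 2 ^ n) / \<rho>^t \<le> 1 / 2^n"
proof -
  have R: "\<rho>^n \<le> \<rho>^t" using assms by (intro power_decreasing) auto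
  have "\<rho> ^ n / 2 ^ n / \<rho>^t \<le> \<rho> ^ t / 2 ^ n / \<rho>^t"
    using R assms by (intro divide_right_mono) auto
  also have "\<dots> = 1 / 2^n" using assms by simp
  finally show ?thesis by simp
qed

theorem lemma4p9:
  fixes idx :: "'n::finite \<Rightarrow> nat" and lam :: complex and \<rho> :: real
  assumes "bij_betw idx UNIV {1..CARD('n)}"
    and "0 < \<rho>" and "\<rho> \<le> 1"
  shows "maxdist (moment idx lam) (frontier (Cset idx \<rho> lam))
           \<ge> \<rho> ^ CARD('n) / (4 ^ CARD('n) * max 1 (cmod lam ^ CARD('n)))
         \<and> (lam = 0 \<longrightarrow> maxdist (moment idx 0) (frontier (Cset idx \<rho> 0))
           \<ge> \<rho> ^ CARD('n) / 2 ^ CARD('n))"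
proof
  show "maxdist (moment idx lam) (frontier (Cset idx \<rho> lam))
           \<ge> \<rho> ^ CARD('n) / (4 ^ CARD('n) * max 1 (cmod lam ^ CARD('n)))"
    using assms by (intro maxdist_Cset H1) auto
  show "lam = 0 \<longrightarrow> maxdist (moment idx 0) (frontier (Cset idx \<rho> 0))
           \<ge> \<rho> ^ CARD('n) / 2 ^ CARD('n)"
    using assms by (intro impI maxdist_Cset H2) auto
qed

end
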